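(* Let $\mathfrak{g}$ be a nilpotent real Lie algebra endowed with a complex structure $J$. If the center $\xi$ of $\mathfrak{g}$ is not $J$-invariant, then $(\mathfrak{g},J)$ does not admit any SKT inner product.
   Context: A complex structure on $\mathfrak{g}$ is $J$ with $J^2=-\mathrm{Id}$ and $[X,Y]-[JX,JY]+J[JX,Y]+J[X,JY]=0$. A $J$-compatible inner product $g$ (i.e. $g(JX,JY)=g(X,Y)$) is SKT if the $3$-form $c(X,Y,Z)=-g([JX,JY],Z)-g([JY,JZ],X)-g([JZ,JX],Y)$ is closed under the Chevalley–Eilenberg differential, equivalently if the fundamental form $\omega=g(J\cdot,\cdot)$ satisfies $\partial\bar\partial\omega=0$. *)

theory Defs
  imports "HOL-Analysis.Analysis"
begin

text \<open>A (finite-dimensional) real Lie algebra is modelled as a bracket on a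
finite-dimensional real vector space (a type of class euclidean_space; its built-in
inner product plays no role).\<close>

definition lie_algebra :: "('a::real_vector \<Rightarrow> 'a \<Rightarrow> 'a) \<Rightarrow> bool" where
  "lie_algebra br \<longleftrightarrow> bilinear br \<and> (\<forall>x y. br x y = - br y x) \<and>
     (\<forall>x y z. br x (br y z) + br y (br z x) + br z (br x y) = 0)"

fun lower_central :: "('a::real_vector \<Rightarrow> 'a \<Rightarrow> 'a) \<Rightarrow> nat \<Rightarrow> 'a set" where
  "lower_central br 0 = UNIV"
| "lower_central br (Suc k) = span {br x y | x y. y \<in> lower_central br k}"

definition nilpotent_lie :: "('a::real_vector \<Rightarrow> 'a \<Rightarrow> 'a) \<Rightarrow> bool" where
  "nilpotent_lie br \<longleftrightarrow> (\<exists>k. lower_central br k = {0})"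

definition lie_center :: "('a::real_vector \<Rightarrow> 'a \<Rightarrow> 'a) \<Rightarrow> 'a set" where
  "lie_center br = {z. \<forall>x. br z x = 0}"

definition complex_structure :: "('a::real_vector \<Rightarrow> 'a \<Rightarrow> 'a) \<Rightarrow> ('a \<Rightarrow> 'a) \<Rightarrow> bool" where
  "complex_structure br J \<longleftrightarrow> linear J \<and> (\<forall>x. J (J x) = - x) \<and>
     (\<forall>x y. br x y - br (J x) (J y) + J (br (J x) y) + J (br x (J y)) = 0)"

definition compatible_inner :: "('a::real_vector \<Rightarrow> 'a) \<Rightarrow> ('a \<Rightarrow> 'a \<Rightarrow> real) \<Rightarrow> bool" where
  "compatible_inner J g \<longleftrightarrow> bilinear g \<and> (\<forall>x y. g x y = g y x) \<and>
     (\<forall>x. x \<noteq> 0 \<longrightarrow> g x x > 0) \<and> (\<forall>x y. g (J x) (J y) = g x y)"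

definition torsion_form ::
  "('a::real_vector \<Rightarrow> 'a \<Rightarrow> 'a) \<Rightarrow> ('a \<Rightarrow> 'a) \<Rightarrow> ('a \<Rightarrow> 'a \<Rightarrow> real) \<Rightarrow> 'a \<Rightarrow> 'a \<Rightarrow> 'a \<Rightarrow> real" where
  "torsion_form br J g X Y Z =
     - g (br (J X) (J Y)) Z - g (br (J Y) (J Z)) X - g (br (J Z) (J X)) Y"

text \<open>Chevalley--Eilenberg differential of a 3-form (trivial coefficients):
  d c (X0,..,X3) = sum_{i<j} (-1)^(i+j) c([Xi,Xj], X0,..,^Xi,..,^Xj,..,X3).\<close>
definition ce_d3 ::
  "('a::real_vector \<Rightarrow> 'a \<Rightarrow> 'a) \<Rightarrow> ('a \<Rightarrow> 'a \<Rightarrow> 'a \<Rightarrow> real) \<Rightarrow> 'a \<Rightarrow> 'a \<Rightarrow> 'a \<Rightarrow> 'a \<Rightarrow> real" where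
  "ce_d3 br c X0 X1 X2 X3 =
     - c (br X0 X1) X2 X3 + c (br X0 X2) X1 X3 - c (br X0 X3) X1 X2
     - c (br X1 X2) X0 X3 + c (br X1 X3) X0 X2 - c (br X2 X3) X0 X1"

definition is_SKT ::
  "('a::real_vector \<Rightarrow> 'a \<Rightarrow> 'a) \<Rightarrow> ('a \<Rightarrow> 'a) \<Rightarrow> ('a \<Rightarrow> 'a \<Rightarrow> real) \<Rightarrow> bool" where
  "is_SKT br J g \<longleftrightarrow> compatible_inner J g \<and>
     (\<forall>X0 X1 X2 X3. ce_d3 br (torsion_form br J g) X0 X1 X2 X3 = 0)"

end

theory Submission
  imports Defs
begin

theorem proposition3p5:
  fixes br :: "'a::euclidean_space \<Rightarrow> 'a \<Rightarrow> 'a" and J :: "'a \<Rightarrow> 'a"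
  assumes "lie_algebra br"
    and "nilpotent_lie br"
    and "complex_structure br J"
    and "\<not> (J ` lie_center br \<subseteq> lie_center br)"
  shows "\<not> (\<exists>g. is_SKT br J g)"
proof
  assume "\<exists>g. is_SKT br J g"
  then obtain g where skt: "is_SKT br J g" by blast
  have la: "bilinear br \<and> (\<forall>x y. br x y = - br y x) \<and>
     (\<forall>x y z. br x (br y z) + br y (br z x) + br z (br x y) = 0)"
    using assms(1) unfolding lie_algebra_def .
  have bb: "bilinear br" using la by blast
  have anti: "\<And>x y. br x y = - br y x" using la by blast
  have jac: "\<And>x y z. br x (br y z) + br y (br z x) + br z (br x y) = 0" using la by blast
  have cs: "linear J \<and> (\<forall>x. J (J x) = - x) \<and>
     (\<forall>x y. br x y - br (J x) (J y) + J (br (J x) y) + J (br x (J y)) = 0)"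
    using assms(3) unfolding complex_structure_def .
  have lJ: "linear J" using cs by blast
  have JJ: "\<And>x. J (J x) = - x" using cs by blast
  have integ: "\<And>x y. br x y - br (J x) (J y) + J (br (J x) y) + J (br x (J y)) = 0" using cs by blast
  have ci: "compatible_inner J g" using skt unfolding is_SKT_def by blast
  have gb: "bilinear g" using ci unfolding compatible_inner_def by blast
  have gpos: "\<And>x. x \<noteq> 0 \<Longrightarrow> g x x > 0" using ci unfolding compatible_inner_def by blast
  have gJ: "\<And>x y. g (J x) (J y) = g x y" using ci unfolding compatible_inner_def by blast
  have dc: "\<And>a b c d. ce_d3 br (torsion_form br J g) a b c d = 0"
    using skt unfolding is_SKT_def by blast
  have J0: "J 0 = 0" using lJ by (rule linear_0)
  have Jneg: "\<And>x. J (- x) = - J x" using lJ by (rule linear_neg)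
  have br0l: "\<And>x. br 0 x = 0" using bb by (rule bilinear_lzero)
  have br0r: "\<And>x. br x 0 = 0" using bb by (rule bilinear_rzero)
  have brnl: "\<And>x y. br (- x) y = - br x y" using bb by (rule bilinear_lneg)
  have brnr: "\<And>x y. br x (- y) = - br x y" using bb by (rule bilinear_rneg)
  have g0l: "\<And>x. g 0 x = 0" using gb by (rule bilinear_lzero)
  have g0r: "\<And>x. g x 0 = 0" using gb by (rule bilinear_rzero)
  have gnl: "\<And>x y. g (- x) y = - g x y" using gb by (rule bilinear_lneg)
  have gnr: "\<And>x y. g x (- y) = - g x y" using gb by (rule bilinear_rneg)
  have gsub: "\<And>x y z. g (x - y) z = g x z - g y z" using gb by (rule bilinear_lsub)
  from assms(4) obtain Z where Zc: "Z \<in> lie_center br" and PZ: "J Z \<notin> lie_center br" by blast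
  define P where "P = J Z"
  have Zl: "\<And>x. br Z x = 0" using Zc unfolding lie_center_def by auto
  have Zr: "\<And>x. br x Z = 0" proof - fix x show "br x Z = 0" using anti[of x Z] Zl by simp qed
  have Pcomm: "\<And>y. br P (J y) = J (br P y)"
  proof -
    fix y
    have "br Z y - br (J Z) (J y) + J (br (J Z) y) + J (br Z (J y)) = 0" by (rule integ)
    then show "br P (J y) = J (br P y)" using Zl J0 unfolding P_def by simp
  qed
  define S where "S k \<longleftrightarrow> (\<exists>y\<in>lower_central br k. br P y \<noteq> 0)" for k
  have S0: "S 0" using PZ unfolding S_def P_def lie_center_def by auto
  obtain k where "lower_central br k = {0}" using assms(2) unfolding nilpotent_lie_def by auto
  then have nSk: "\<not> S k" unfolding S_def using br0r by auto
  have "\<exists>m. S m \<and> \<not> S (Suc m)"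
  proof (rule ccontr)
    assume "\<not> ?thesis"
    then have "\<forall>m. S m \<longrightarrow> S (Suc m)" by blast
    then have "S n" for n by (induction n) (use S0 in auto)
    then show False using nSk by blast
  qed
  then obtain m where Sm: "S m" and nSm: "\<not> S (Suc m)" by blast
  from Sm obtain Y where Ym: "Y \<in> lower_central br m" and UY: "br P Y \<noteq> 0"
    unfolding S_def by blast
  define U where "U = br P Y"
  define V where "V = br Y (J Y)"
  have kill: "\<And>v. v \<in> lower_central br (Suc m) \<Longrightarrow> br P v = 0" using nSm unfolding S_def by auto
  have "U \<in> lower_central br (Suc m)" unfolding U_def using Ym
    by (auto intro: span_base)
  then have PU: "br P U = 0" by (rule kill)
  have "br (J Y) Y \<in> lower_central br (Suc m)" using Ym by (auto intro: span_base)
  then have "- br (J Y) Y \<in> lower_central br (Suc m)" by (simp add: span_neg)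
  then have "V \<in> lower_central br (Suc m)" unfolding V_def using anti[of Y "J Y"] by simp
  then have PV: "br P V = 0" by (rule kill)
  have PJY: "br P (J Y) = J U" unfolding U_def by (rule Pcomm)
  have PJU: "br P (J U) = 0" using Pcomm[of U] PU J0 by simp
  have PJV: "br P (J V) = 0" using Pcomm[of V] PV J0 by simp
  define c where "c = torsion_form br J g"
  have c0: "\<And>a b. c 0 a b = 0" unfolding c_def torsion_form_def using J0 br0l br0r g0l g0r by simp
  have ZP: "br Z P = 0" "br Z Y = 0" "br Z (J Y) = 0" using Zl by auto
  have JP: "J P = - Z" unfolding P_def by (rule JJ)
  have t4: "c U Z (J Y) = g U U + g (br Y (J U)) Z"
  proof -
    have "c U Z (J Y) = - g (br (J U) P) (J Y) - g (br P (J (J Y))) U - g (br (J (J Y)) (J U)) Z"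
      unfolding c_def torsion_form_def P_def by simp
    also have "\<dots> = g U U + g (br Y (J U)) Z"
      using anti[of "J U" P] PJU JJ brnl brnr gnl g0l unfolding U_def by simp
    finally show ?thesis .
  qed
  have t5: "c (J U) Z Y = - g U U + g (br (J Y) U) Z"
  proof -
    have "c (J U) Z Y = - g (br (J (J U)) P) Y - g (br P (J Y)) (J U) - g (br (J Y) (J (J U))) Z"
      unfolding c_def torsion_form_def P_def by simp
    also have "\<dots> = - g U U + g (br (J Y) U) Z"
      using anti[of "- U" P] PU JJ brnl brnr gnl g0l gJ PJY by simp
    finally show ?thesis .
  qed
  have t6: "c V Z P = 0"
  proof -
    have "c V Z P = - g (br (J V) P) P - g (br P (J P)) V - g (br (J P) (J V)) Z"
      unfolding c_def torsion_form_def P_def by simp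
    also have "\<dots> = 0"
      using JP anti[of "J V" P] PJV Zl Zr brnl brnr g0l by simp
    finally show ?thesis .
  qed
  have jacY: "br (J Y) U = br Y (J U)"
  proof -
    have "br P (br Y (J Y)) + br Y (br (J Y) P) + br (J Y) (br P Y) = 0" by (rule jac)
    then have "br Y (br (J Y) P) + br (J Y) U = 0" using PV unfolding V_def U_def by simp
    moreover have "br (J Y) P = - J U" using PJY anti[of "J Y" P] by simp
    ultimately show ?thesis using brnr by (simp add: add_eq_0_iff)
  qed
  have "ce_d3 br c Z P Y (J Y) = 0" using dc unfolding c_def by blast
  then have "- c (br Z P) Y (J Y) + c (br Z Y) P (J Y) - c (br Z (J Y)) P Y
     - c (br P Y) Z (J Y) + c (br P (J Y)) Z Y - c (br Y (J Y)) Z P = 0"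
    unfolding ce_d3_def .
  then have "- c U Z (J Y) + c (J U) Z Y - c V Z P = 0"
    using ZP c0 PJY unfolding U_def V_def by simp
  then have "- 2 * g U U = 0" using t4 t5 t6 jacY by simp
  moreover have "g U U > 0" using gpos UY unfolding U_def by blast
  ultimately show False by simp
qed

end
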